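(* Let $T\ge2$. For every $s\ge s_{a,1}(T):=256\,r^2(\sigma/\Delta_k)^2\log T$, $$a_{k,s,1}:=E\big[\min\{N_{1,s}(\tau_k),T\}\,\mathbf 1(A_{1,s})\,\mathbf 1(G_{1,s})\big]\le T^{-1}.$$
   Context: Setting: arm $k\in[K]$ has i.i.d. rewards $Y_{k,1},Y_{k,2},\dots\sim N(\mu_k,\sigma^2)$; arm 1 is optimal, $\mu_1=\max_k\mu_k$, $\Delta_k=\mu_1-\mu_k>0$ for the suboptimal arm $k$ considered, and $\tau_k=(\mu_1+\mu_k)/2$. For $s\ge1$: $\mathcal H_{k,s}=(Y_{k,1},\dots,Y_{k,s})$, $\bar Y_{k,s}=s^{-1}\sum_{i=1}^sY_{k,i}$, $\mathrm{RSS}_{k,s}=\sum_{i=1}^s(Y_{k,i}-\bar Y_{k,s})^2$. Given $\sigma_a>0$, $\mathrm{PRSS}_{s}=2(s+2)\sigma_a^2$ and $r=\sigma_a/\sigma$. The ReBoot index given $\mathcal H_{k,s}$ is $\hat\mu^*_{k,s}=\bar Y_{k,s}+\frac1{s+2}\sum_{i=1}^{s+2}w_ie_{k,i}$ with $e_{k,i}=Y_{k,i}-\bar Y_{k,s}$ ($i\le s$), $e_{k,s+1}=\sqrt{s+2}\sigma_a$, $e_{k,s+2}=-\sqrt{s+2}\sigma_a$, and $w_i$ i.i.d. $N(0,1)$ independent of the rewards; thus conditionally on $\mathcal H_{k,s}$, $\hat\mu^*_{k,s}\sim N\big(\bar Y_{k,s},(s+2)^{-2}(\mathrm{RSS}_{k,s}+\mathrm{PRSS}_s)\big)$.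 Define $Q_{k,s}(\tau)=P(\hat\mu^*_{k,s}>\tau\mid\mathcal H_{k,s})$ and $N_{1,s}(\tau)=Q_{1,s}(\tau)^{-1}-1$. Events: $A_{1,s}=\{\bar Y_{1,s}-\mu_1>-\Delta_k/4\}$, $G_{1,s}=\{\mathrm{RSS}_{1,s}\le\mathrm{PRSS}_s\}$. *)

theory Defs
  imports "HOL-Probability.Probability"
begin

(* A history H_{1,s} = (Y_1,...,Y_s) is represented as y :: nat => real, with y i = Y_{i+1}, i < s. *)

definition sample_mean :: "nat \<Rightarrow> (nat \<Rightarrow> real) \<Rightarrow> real" where
  "sample_mean s y = (\<Sum>i<s. y i) / real s"

definition rss :: "nat \<Rightarrow> (nat \<Rightarrow> real) \<Rightarrow> real" where
  "rss s y = (\<Sum>i<s. (y i - sample_mean s y)\<^sup>2)"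

definition prss :: "real \<Rightarrow> nat \<Rightarrow> real" where
  "prss \<sigma>a s = 2 * (real s + 2) * \<sigma>a\<^sup>2"

(* conditional law of the ReBoot index given the history:
   N(mean, (s+2)^{-2} (RSS + PRSS)) ; normal_density takes the standard deviation *)
definition reboot_law :: "real \<Rightarrow> nat \<Rightarrow> (nat \<Rightarrow> real) \<Rightarrow> real measure" where
  "reboot_law \<sigma>a s y = density lborel
     (normal_density (sample_mean s y) (sqrt ((rss s y + prss \<sigma>a s) / (real s + 2)\<^sup>2)))"

definition Q_idx :: "real \<Rightarrow> nat \<Rightarrow> (nat \<Rightarrow> real) \<Rightarrow> real \<Rightarrow> real" where
  "Q_idx \<sigma>a s y \<tau> = measure (reboot_law \<sigma>a s y) {\<tau><..}"

definition N_idx :: "real \<Rightarrow> nat \<Rightarrow> (nat \<Rightarrow> real) \<Rightarrow> real \<Rightarrow> real" where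
  "N_idx \<sigma>a s y \<tau> = 1 / Q_idx \<sigma>a s y \<tau> - 1"

definition reward_law :: "real \<Rightarrow> real \<Rightarrow> nat \<Rightarrow> (nat \<Rightarrow> real) measure" where
  "reward_law \<mu> \<sigma> s = PiM {..<s} (\<lambda>_. density lborel (normal_density \<mu> \<sigma>))"

definition a_ks1 :: "real \<Rightarrow> real \<Rightarrow> real \<Rightarrow> real \<Rightarrow> real \<Rightarrow> nat \<Rightarrow> real" where
  "a_ks1 \<mu>1 \<sigma> \<sigma>a \<Delta> T s =
     (LINT y | reward_law \<mu>1 \<sigma> s.
        min (N_idx \<sigma>a s y (\<mu>1 - \<Delta> / 2)) T
        * (if sample_mean s y - \<mu>1 > - \<Delta> / 4 then 1 else 0)
        * (if rss s y \<le> prss \<sigma>a s then 1 else 0))"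

end

theory Submission imports Defs begin

lemma pt_bound:
  fixes m w \<tau> x :: real
  assumes "w > 0" "\<tau> < m" "x \<le> \<tau>"
  shows "normal_density m w x \<le> exp (-(m-\<tau>)\<^sup>2/(2*w\<^sup>2)) * normal_density \<tau> w x"
proof -
  have sq: "(x-m)\<^sup>2 \<ge> (m-\<tau>)\<^sup>2 + (x-\<tau>)\<^sup>2"
  proof -
    have "(x-m)\<^sup>2 = (x-\<tau>)\<^sup>2 + 2*(m-\<tau>)*(\<tau>-x) + (m-\<tau>)\<^sup>2" by (simp add: power2_eq_square algebra_simps)
    moreover have "2*(m-\<tau>)*(\<tau>-x) \<ge> 0" using assms by simp
    ultimately show ?thesis by linarith
  qed
  have pos: "2*w\<^sup>2 > 0" using assms by simp
  have "-(x-m)\<^sup>2/(2*w\<^sup>2) \<le> -(m-\<tau>)\<^sup>2/(2*w\<^sup>2) + -(x-\<tau>)\<^sup>2/(2*w\<^sup>2)"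
    using sq pos by (simp add: divide_right_mono add_divide_distrib[symmetric] diff_divide_distrib[symmetric] divide_simps)
  hence "exp (-(x-m)\<^sup>2/(2*w\<^sup>2)) \<le> exp (-(m-\<tau>)\<^sup>2/(2*w\<^sup>2)) * exp (-(x-\<tau>)\<^sup>2/(2*w\<^sup>2))"
    by (simp add: exp_add[symmetric])
  thus ?thesis unfolding normal_density_def
    by (simp add: divide_right_mono)
qed

lemma tail:
  fixes m w \<tau> :: real
  assumes "w > 0" "\<tau> < m"
  shows "measure (density lborel (normal_density m w)) {\<tau><..} \<ge> 1 - exp (-(m-\<tau>)\<^sup>2/(2*w\<^sup>2))"
proof -
  define e where "e = exp (-(m-\<tau>)\<^sup>2/(2*w\<^sup>2))"
  interpret P: prob_space "density lborel (normal_density m w)" using assms(1) by (simp add: prob_space_normal_density)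
  have "emeasure (density lborel (normal_density m w)) {..\<tau>}
      = (\<integral>\<^sup>+ x. ennreal (normal_density m w x) * indicator {..\<tau>} x \<partial>lborel)"
    by (simp add: emeasure_density)
  also have "\<dots> \<le> (\<integral>\<^sup>+ x. ennreal e * ennreal (normal_density \<tau> w x) \<partial>lborel)"
  proof (rule nn_integral_mono)
    fix x show "ennreal (normal_density m w x) * indicator {..\<tau>} x \<le> ennreal e * ennreal (normal_density \<tau> w x)"
    proof (cases "x \<le> \<tau>")
      case True
      hence "normal_density m w x \<le> e * normal_density \<tau> w x" using pt_bound[OF assms True] e_def by simp
      thus ?thesis using True by (simp add: ennreal_mult[symmetric] e_def)
    qed simp
  qed
  also have "\<dots> = ennreal e * (\<integral>\<^sup>+ x. ennreal (normal_density \<tau> w x) \<partial>lborel)"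
    by (simp add: nn_integral_cmult)
  also have "(\<integral>\<^sup>+ x. ennreal (normal_density \<tau> w x) \<partial>lborel) = 1"
    using assms(1) by (simp add: nn_integral_eq_integral)
  finally have le: "emeasure (density lborel (normal_density m w)) {..\<tau>} \<le> ennreal e" by simp
  have e0: "e \<ge> 0" unfolding e_def by simp
  have "measure (density lborel (normal_density m w)) {..\<tau>} \<le> e"
    using le e0 unfolding measure_def by (simp add: enn2real_leI)
  moreover have "{\<tau><..} = space (density lborel (normal_density m w)) - {..\<tau>}" by auto
  moreover have "P.prob (space (density lborel (normal_density m w)) - {..\<tau>}) = 1 - P.prob {..\<tau>}"
    by (rule P.prob_compl) simp
  ultimately show ?thesis unfolding e_def by simp
qed

lemma point:
  fixes \<mu>1 \<Delta> \<sigma>a T :: real and s :: nat and y :: "nat \<Rightarrow> real"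
  assumes sa: "\<sigma>a > 0" and D: "\<Delta> > 0" and T: "T \<ge> 2"
    and hs: "real s \<ge> 256 * \<sigma>a\<^sup>2 / \<Delta>\<^sup>2 * ln T"
    and A: "sample_mean s y - \<mu>1 > - \<Delta> / 4" and G: "rss s y \<le> prss \<sigma>a s"
  shows "N_idx \<sigma>a s y (\<mu>1 - \<Delta> / 2) \<le> 1 / T"
proof -
  define m where "m = sample_mean s y"
  define r where "r = rss s y"
  define P where "P = prss \<sigma>a s"
  define v where "v = (r + P) / (real s + 2)\<^sup>2"
  define w where "w = sqrt v"
  define \<tau> where "\<tau> = \<mu>1 - \<Delta> / 2"
  define d where "d = m - \<tau>"
  have r0: "r \<ge> 0" unfolding r_def rss_def by (simp add: sum_nonneg)
  have P: "P = 2 * (real s + 2) * \<sigma>a\<^sup>2" unfolding P_def prss_def by simp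
  have Ppos: "P > 0" using P sa by simp
  have s2: "real s + 2 > 0" by simp
  have vpos: "v > 0" unfolding v_def using r0 Ppos by simp
  have wpos: "w > 0" unfolding w_def using vpos by simp
  have w2: "w\<^sup>2 = v" unfolding w_def using vpos by simp
  have dpos: "d > \<Delta> / 4" unfolding d_def \<tau>_def m_def using A by simp
  have "v \<le> 2 * P / (real s + 2)\<^sup>2" unfolding v_def using G r_def P_def
    by (simp add: divide_right_mono)
  also have "\<dots> = 4 * \<sigma>a\<^sup>2 / (real s + 2)" proof -
    have ne: "real s + 2 \<noteq> 0" using s2 by linarith
    have "2 * P / (real s + 2)\<^sup>2 = ((real s + 2) * (4 * \<sigma>a\<^sup>2)) / ((real s + 2) * (real s + 2))"
      unfolding P power2_eq_square by (simp add: algebra_simps)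
    also have "\<dots> = 4 * \<sigma>a\<^sup>2 / (real s + 2)" using ne by (rule nonzero_mult_divide_mult_cancel_left)
    finally show ?thesis .
  qed
  finally have vle: "v \<le> 4 * \<sigma>a\<^sup>2 / (real s + 2)" .
  have d2: "d\<^sup>2 \<ge> \<Delta>\<^sup>2 / 16"
  proof -
    have "(\<Delta>/4)\<^sup>2 \<le> d\<^sup>2" using dpos D by (intro power_mono) auto
    thus ?thesis by (simp add: power_divide)
  qed
  have lnT: "ln T \<ge> 0" using T by simp
  have hs2: "\<Delta>\<^sup>2 * real s \<ge> 256 * \<sigma>a\<^sup>2 * ln T"
  proof -
    have "\<Delta>\<^sup>2 * real s \<ge> \<Delta>\<^sup>2 * (256 * \<sigma>a\<^sup>2 / \<Delta>\<^sup>2 * ln T)"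
      using hs D by (intro mult_left_mono) auto
    thus ?thesis using D by simp
  qed
  have key: "d\<^sup>2 / (2 * v) \<ge> 2 * ln T"
  proof -
    have "d\<^sup>2 / (2 * v) \<ge> (\<Delta>\<^sup>2 / 16) / (8 * \<sigma>a\<^sup>2 / (real s + 2))"
      using d2 vle vpos sa D by (intro frac_le) auto
    also have "(\<Delta>\<^sup>2 / 16) / (8 * \<sigma>a\<^sup>2 / (real s + 2)) = \<Delta>\<^sup>2 * (real s + 2) / (128 * \<sigma>a\<^sup>2)"
      using sa s2 by (simp add: field_simps)
    also have "\<Delta>\<^sup>2 * (real s + 2) / (128 * \<sigma>a\<^sup>2) \<ge> 2 * ln T"
    proof -
      have "\<Delta>\<^sup>2 * (real s + 2) \<ge> 256 * \<sigma>a\<^sup>2 * ln T" 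
      proof -
        have "\<Delta>\<^sup>2*(real s+2) = \<Delta>\<^sup>2*real s + 2*\<Delta>\<^sup>2" by (simp add: algebra_simps)
        moreover have "\<Delta>\<^sup>2 \<ge> 0" by simp
        ultimately show ?thesis using hs2 by linarith
      qed
      thus ?thesis using sa by (simp add: field_simps)
    qed
    finally show ?thesis .
  qed
  have "exp (-d\<^sup>2 / (2 * w\<^sup>2)) \<le> exp (- (2 * ln T))" using key unfolding w2 by simp
  also have "2 * ln T = ln (T\<^sup>2)" using T by (simp add: ln_realpow)
  also have "exp (- ln (T\<^sup>2)) = 1 / T\<^sup>2" using T by (simp add: exp_minus inverse_eq_divide)
  finally have ex: "exp (-d\<^sup>2 / (2 * w\<^sup>2)) \<le> 1 / T\<^sup>2" .
  have dd: "\<tau> < m" using dpos D d_def by simp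
  have Q: "Q_idx \<sigma>a s y \<tau> \<ge> 1 - 1 / T\<^sup>2"
    using tail[OF wpos dd] ex unfolding Q_idx_def reboot_law_def w_def v_def m_def r_def P_def d_def
    by simp
  have T2: "T\<^sup>2 \<ge> 4" 
  proof -
    have "T*T \<ge> 2*2" using T by (intro mult_mono) auto
    thus ?thesis by (simp add: power2_eq_square)
  qed
  have q0: "1 - 1 / T\<^sup>2 > 0"
  proof -
    have "1 / T\<^sup>2 \<le> 1 / 4" using T2 by (intro frac_le) auto
    thus ?thesis by linarith
  qed
  have "N_idx \<sigma>a s y \<tau> = 1 / Q_idx \<sigma>a s y \<tau> - 1" unfolding N_idx_def by simp
  also have "\<dots> \<le> 1 / (1 - 1 / T\<^sup>2) - 1" using Q q0 by (intro diff_right_mono frac_le) auto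
  also have "\<dots> = 1 / (T\<^sup>2 - 1)"
  proof -
    have ne: "T\<^sup>2 \<noteq> 0" "T\<^sup>2 - 1 \<noteq> 0" using T2 by auto
    have "1 - 1 / T\<^sup>2 = (T\<^sup>2 - 1) / T\<^sup>2" using ne by (simp add: diff_divide_distrib)
    hence "1 / (1 - 1 / T\<^sup>2) = T\<^sup>2 / (T\<^sup>2 - 1)" by simp
    also have "\<dots> = 1 + 1 / (T\<^sup>2 - 1)"
    proof -
      obtain u where u: "u = T\<^sup>2 - 1" by simp
      have "u \<noteq> 0" using ne u by simp
      hence "(u + 1) / u = 1 + 1 / u" by (simp add: add_divide_distrib)
      thus ?thesis using u by simp
    qed
    finally show ?thesis by simp
  qed
  also have "\<dots> \<le> 1 / T" 
  proof -
    have "T*T \<ge> 2*T" using T by (intro mult_right_mono) auto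
    hence "T \<le> T\<^sup>2 - 1" using T unfolding power2_eq_square by linarith
    thus ?thesis using T by (intro frac_le) auto
  qed
  finally show ?thesis unfolding \<tau>_def .
qed

theorem mainTheorem4:
  fixes \<mu>1 \<mu>k \<sigma> \<sigma>a T :: real and s :: nat
  assumes "\<sigma> > 0" and "\<sigma>a > 0" and "\<mu>k < \<mu>1" and "T \<ge> 2" and "s \<ge> 1"
    and "real s \<ge> 256 * (\<sigma>a / \<sigma>)\<^sup>2 * (\<sigma> / (\<mu>1 - \<mu>k))\<^sup>2 * ln T"
  shows "a_ks1 \<mu>1 \<sigma> \<sigma>a (\<mu>1 - \<mu>k) T s \<le> 1 / T"
proof -
  define \<Delta> where "\<Delta> = \<mu>1 - \<mu>k"
  have D: "\<Delta> > 0" using assms(3) \<Delta>_def by simp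
  have eq: "(\<sigma>a / \<sigma>)\<^sup>2 * (\<sigma> / \<Delta>)\<^sup>2 = \<sigma>a\<^sup>2 / \<Delta>\<^sup>2"
    using assms(1) D by (simp add: power_divide)
  have hs: "real s \<ge> 256 * \<sigma>a\<^sup>2 / \<Delta>\<^sup>2 * ln T"
    using assms(6) eq unfolding \<Delta>_def[symmetric] by (simp add: mult.assoc)
  define M where "M = reward_law \<mu>1 \<sigma> s"
  have PM: "prob_space M" unfolding M_def reward_law_def
    using assms(1) by (intro prob_space_PiM) (simp add: prob_space_normal_density)
  define f where "f = (\<lambda>y. min (N_idx \<sigma>a s y (\<mu>1 - \<Delta> / 2)) T
        * (if sample_mean s y - \<mu>1 > - \<Delta> / 4 then 1 else 0)
        * (if rss s y \<le> prss \<sigma>a s then 1 else 0))"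
  have Tpos: "1 / T > 0" using assms(4) by simp
  have fb: "f y \<le> 1 / T" for y
  proof (cases "sample_mean s y - \<mu>1 > - \<Delta> / 4 \<and> rss s y \<le> prss \<sigma>a s")
    case True
    have "min (N_idx \<sigma>a s y (\<mu>1 - \<Delta> / 2)) T \<le> 1 / T"
      using point[OF assms(2) D assms(4) hs] True by (meson min.coboundedI1)
    thus ?thesis using True unfolding f_def by simp
  next
    case False
    thus ?thesis using Tpos unfolding f_def by auto
  qed
  interpret P: prob_space M by (rule PM)
  have "integral\<^sup>L M f \<le> 1 / T"
  proof (cases "integrable M f")
    case True
    have "integral\<^sup>L M f \<le> integral\<^sup>L M (\<lambda>_. 1 / T)"
      using True PM fb by (intro integral_mono) auto
    also have "\<dots> = 1 / T" by (simp add: P.prob_space)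
    finally show ?thesis .
  next
    case False
    thus ?thesis using Tpos by (simp add: not_integrable_integral_eq)
  qed
  thus ?thesis unfolding a_ks1_def M_def f_def \<Delta>_def .
qed

end
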